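(* Let $X_1,\dots,X_n$ be i.i.d. real random variables whose common distribution is symmetric about an unknown $\mu\in\mathbb{R}$ (i.e. $X_1-\mu$ and $\mu-X_1$ have the same distribution). Fix integers $k\le n$ and $1\le r\le m$, and let $R(\theta)$ be the one-sided resampled median-of-means rank defined in the context. Then $$\mathbb{P}\big(R(\mu)>m-r\big)=\frac{r}{m}.$$
   Context: Blocks: for $\ell=1,\dots,k$ let $B_\ell=\{i\in[n]: i\equiv \ell \pmod k\}$, so each $|B_\ell|\ge \lfloor n/k\rfloor$. Median: for reals $y_1,\dots,y_k$ with order statistics $y_{(1)}\le\dots\le y_{(k)}$, $\mathrm{med}(y_1,\dots,y_k)=y_{(k/2)}$ if $k$ is even and $y_{(\lfloor k/2\rfloor+1)}$ if $k$ is odd. Median-of-means: for $x=(x_1,\dots,x_n)$, $\widehat\mu(x)=\mathrm{med}\big(\frac{1}{|B_1|}\sum_{i\in B_1}x_i,\dots,\frac{1}{|B_k|}\sum_{i\in B_k}x_i\big)$. Randomization: $\{\alpha_{i,j}\}_{i\in[n],j\in[m-1]}$ are i.i.d. Rademacher signs ($\pm1$ with probability $1/2$) independent of the data, and $\pi$ is a uniformly random permutation of $\{0,1,\dots,m-1\}$ independent of the data and of the signs. For $\theta\in\mathbb{R}$: $\mathcal{D}_0(\theta)=(X_1,\dots,X_n)$ and $\mathcal{D}_j(\theta)=(\alpha_{1,j}(X_1-\theta)+\theta,\dots,\alpha_{n,j}(X_n-\theta)+\theta)$ for $j\in[m-1]$ (the same signs are used for every $\theta$). Reference variables: $S_j(\theta)=\widehat\mu(\mathcal{D}_j(\theta))-\theta$,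 $j=0,\dots,m-1$. Tie-broken order: $S_j(\theta)\prec_\pi S_l(\theta)$ iff $S_j(\theta)<S_l(\theta)$, or $S_j(\theta)=S_l(\theta)$ and $\pi(j)<\pi(l)$. Rank: $R(\theta)=1+\sum_{j=1}^{m-1}\mathbb{I}\big(S_0(\theta)\prec_\pi S_j(\theta)\big)$. *)

theory Defs
  imports "HOL-Probability.Probability" "HOL-Combinatorics.Permutations"
begin

definition med :: "real list \<Rightarrow> real" where
  "med ys = (let zs = sort ys; k = length ys in
     if even k then zs ! (k div 2 - 1) else zs ! (k div 2))"

definition block :: "nat \<Rightarrow> nat \<Rightarrow> nat \<Rightarrow> nat set" where
  "block n k l = {i \<in> {1..n}. i mod k = l mod k}"

definition mom :: "nat \<Rightarrow> nat \<Rightarrow> (nat \<Rightarrow> real) \<Rightarrow> real" where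
  "mom n k x = med (map (\<lambda>l. (\<Sum>i\<in>block n k l. x i) / real (card (block n k l))) [1..<k+1])"

definition resample :: "(nat \<Rightarrow> nat \<Rightarrow> real) \<Rightarrow> (nat \<Rightarrow> real) \<Rightarrow> real \<Rightarrow> nat \<Rightarrow> nat \<Rightarrow> real" where
  "resample \<alpha> x \<theta> j i = (if j = 0 then x i else \<alpha> i j * (x i - \<theta>) + \<theta>)"

definition refvar :: "nat \<Rightarrow> nat \<Rightarrow> (nat \<Rightarrow> nat \<Rightarrow> real) \<Rightarrow> (nat \<Rightarrow> real) \<Rightarrow> real \<Rightarrow> nat \<Rightarrow> real" where
  "refvar n k \<alpha> x \<theta> j = mom n k (resample \<alpha> x \<theta> j) - \<theta>"

definition prec_pi :: "(nat \<Rightarrow> nat) \<Rightarrow> real \<Rightarrow> nat \<Rightarrow> real \<Rightarrow> nat \<Rightarrow> bool" where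
  "prec_pi \<pi> a j b l \<longleftrightarrow> a < b \<or> (a = b \<and> \<pi> j < \<pi> l)"

definition rank :: "nat \<Rightarrow> nat \<Rightarrow> nat \<Rightarrow> (nat \<Rightarrow> nat \<Rightarrow> real) \<Rightarrow> (nat \<Rightarrow> nat) \<Rightarrow> (nat \<Rightarrow> real) \<Rightarrow> real \<Rightarrow> nat" where
  "rank n k m \<alpha> \<pi> x \<theta> = 1 + card {j \<in> {1..m-1}.
      prec_pi \<pi> (refvar n k \<alpha> x \<theta> 0) 0 (refvar n k \<alpha> x \<theta> j) j}"

text \<open>The uniform distribution on this finite set
  makes the signs i.i.d. Rademacher and pi uniform, independent of each other.\<close>
definition rand_space :: "nat \<Rightarrow> nat \<Rightarrow> ((nat \<Rightarrow> nat \<Rightarrow> real) \<times> (nat \<Rightarrow> nat)) set" where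
  "rand_space n m =
     {\<alpha>. \<forall>i j. \<alpha> i j \<in> {-1, 1} \<and> (\<alpha> i j \<noteq> 1 \<longrightarrow> i \<in> {1..n} \<and> j \<in> {1..m-1})}
     \<times> {\<pi>. \<pi> permutes {0..<m}}"

end

theory Submission
  imports Defs
begin


definition Rc :: "nat \<Rightarrow> (nat \<Rightarrow> real) \<Rightarrow> (nat \<Rightarrow> nat) \<Rightarrow> nat \<Rightarrow> nat" where
  "Rc m V \<pi> c = 1 + card {j\<in>{0..<m}-{c}. prec_pi \<pi> (V c) c (V j) j}"

lemma prec_trans: "prec_pi \<pi> a i b j \<Longrightarrow> prec_pi \<pi> b j c l \<Longrightarrow> prec_pi \<pi> a i c l"
  unfolding prec_pi_def by auto

lemma prec_irrefl: "\<not> prec_pi \<pi> a i a i"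
  unfolding prec_pi_def by auto

lemma Rc_strict:
  assumes c: "c < m" and d: "d < m" and cd: "prec_pi \<pi> (V c) c (V d) d"
  shows "Rc m V \<pi> d < Rc m V \<pi> c"
proof -
  let ?Sd = "{j\<in>{0..<m}-{d}. prec_pi \<pi> (V d) d (V j) j}"
  let ?Sc = "{j\<in>{0..<m}-{c}. prec_pi \<pi> (V c) c (V j) j}"
  have "insert d ?Sd \<subseteq> ?Sc"
    using cd d prec_trans[of \<pi> "V c" c "V d" d] prec_irrefl[of \<pi> "V c" c] by auto
  then have "card (insert d ?Sd) \<le> card ?Sc" by (intro card_mono) auto
  moreover have "card (insert d ?Sd) = Suc (card ?Sd)" by simp
  ultimately show ?thesis unfolding Rc_def by simp
qed

lemma Rc_inj:
  assumes inj: "inj_on \<pi> {0..<m}"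
  shows "inj_on (Rc m V \<pi>) {0..<m}"
proof (rule inj_onI)
  fix c d assume c: "c \<in> {0..<m}" and d: "d \<in> {0..<m}" and eq: "Rc m V \<pi> c = Rc m V \<pi> d"
  show "c = d"
  proof (rule ccontr)
    assume "c \<noteq> d"
    then have "\<pi> c \<noteq> \<pi> d" using inj c d by (auto dest: inj_onD)
    then have "prec_pi \<pi> (V c) c (V d) d \<or> prec_pi \<pi> (V d) d (V c) c"
      unfolding prec_pi_def by auto
    then show False using Rc_strict[of c m d \<pi> V] Rc_strict[of d m c \<pi> V] c d eq by auto
  qed
qed

lemma Rc_range: "c < m \<Longrightarrow> Rc m V \<pi> c \<in> {1..m}"
proof -
  assume c: "c < m"
  have "card {j\<in>{0..<m}-{c}. prec_pi \<pi> (V c) c (V j) j} \<le> card ({0..<m}-{c})"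
    by (intro card_mono) auto
  also have "\<dots> = m - 1" using c by simp
  finally show ?thesis unfolding Rc_def using c by auto
qed

lemma Rc_count:
  assumes inj: "inj_on \<pi> {0..<m}" and rm: "r \<le> m"
  shows "card {c\<in>{0..<m}. m - r < Rc m V \<pi> c} = r"
proof -
  have sub: "Rc m V \<pi> ` {0..<m} \<subseteq> {1..m}" using Rc_range by auto
  have "card (Rc m V \<pi> ` {0..<m}) = m" using card_image[OF Rc_inj[OF inj]] by simp
  then have img: "Rc m V \<pi> ` {0..<m} = {1..m}"
    using sub by (intro card_subset_eq) auto
  have "card {c\<in>{0..<m}. m - r < Rc m V \<pi> c} = card (Rc m V \<pi> ` {c\<in>{0..<m}. m - r < Rc m V \<pi> c})"
    by (rule card_image[symmetric]) (rule inj_on_subset[OF Rc_inj[OF inj]], auto)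
  also have "Rc m V \<pi> ` {c\<in>{0..<m}. m - r < Rc m V \<pi> c} = {m-r+1..m}"
  proof
    show "Rc m V \<pi> ` {c\<in>{0..<m}. m - r < Rc m V \<pi> c} \<subseteq> {m-r+1..m}"
      using Rc_range by fastforce
    show "{m-r+1..m} \<subseteq> Rc m V \<pi> ` {c\<in>{0..<m}. m - r < Rc m V \<pi> c}"
    proof
      fix v assume v: "v \<in> {m-r+1..m}"
      then have "v \<in> Rc m V \<pi> ` {0..<m}" unfolding img by auto
      then obtain c where "c \<in> {0..<m}" "v = Rc m V \<pi> c" by blast
      then show "v \<in> Rc m V \<pi> ` {c\<in>{0..<m}. m - r < Rc m V \<pi> c}" using v by auto
    qed
  qed
  also have "card {m-r+1..m} = r" using rm by simp
  finally show ?thesis .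
qed



definition Sg :: "nat \<Rightarrow> nat \<Rightarrow> (nat \<Rightarrow> nat \<Rightarrow> real) set" where
  "Sg n m = {\<sigma>. \<forall>i j. \<sigma> i j \<in> {-1,1} \<and> (\<sigma> i j \<noteq> 1 \<longrightarrow> i \<in> {1..n} \<and> j < m)}"

definition Pm :: "nat \<Rightarrow> (nat \<Rightarrow> nat) set" where
  "Pm m = {\<pi>. \<pi> permutes {0..<m}}"

definition Vf :: "nat \<Rightarrow> nat \<Rightarrow> real \<Rightarrow> (nat \<Rightarrow> real) \<Rightarrow> (nat \<Rightarrow> nat \<Rightarrow> real) \<Rightarrow> nat \<Rightarrow> real" where
  "Vf n k \<mu> x \<sigma> j = mom n k (\<lambda>i. \<mu> + \<sigma> i j * (x i - \<mu>)) - \<mu>"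

lemma Rc_swap:
  assumes c: "c < m"
  shows "Rc m (\<lambda>j. W (Transposition.transpose 0 c j)) (\<pi> \<circ> Transposition.transpose 0 c) 0 = Rc m W \<pi> c"
proof -
  let ?t = "Transposition.transpose 0 c"
  let ?P = "\<lambda>j'. prec_pi \<pi> (W c) c (W j') j'"
  have eq: "{j\<in>{0..<m}-{0}. prec_pi (\<pi> \<circ> ?t) (W (?t 0)) 0 (W (?t j)) j} = {j\<in>{0..<m}-{0}. ?P (?t j)}"
    by (auto simp: prec_pi_def)
  have img: "?t ` {j\<in>{0..<m}-{0}. ?P (?t j)} = {j\<in>{0..<m}-{c}. ?P j}"
  proof
    show "?t ` {j\<in>{0..<m}-{0}. ?P (?t j)} \<subseteq> {j\<in>{0..<m}-{c}. ?P j}"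
      using c prec_irrefl[of \<pi> "W c" c] by (auto simp: Transposition.transpose_def split: if_splits)
    show "{j\<in>{0..<m}-{c}. ?P j} \<subseteq> ?t ` {j\<in>{0..<m}-{0}. ?P (?t j)}"
    proof
      fix j assume j: "j \<in> {j\<in>{0..<m}-{c}. ?P j}"
      have "?t (?t j) = j" by simp
      moreover have "?t j \<in> {j\<in>{0..<m}-{0}. ?P (?t j)}" using j c by (auto simp: Transposition.transpose_def)
      ultimately show "j \<in> ?t ` {j\<in>{0..<m}-{0}. ?P (?t j)}" by (metis image_eqI)
    qed
  qed
  have "card {j\<in>{0..<m}-{0}. ?P (?t j)} = card (?t ` {j\<in>{0..<m}-{0}. ?P (?t j)})"
    by (rule card_image[symmetric]) (rule inj_on_subset[OF inj_transpose], simp)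
  then show ?thesis unfolding Rc_def using eq img by simp
qed

lemma Pm_finite: "finite (Pm m)"
  unfolding Pm_def by (rule finite_permutations) simp

lemma swap_bij:
  assumes c: "c < m"
  shows "bij_betw (\<lambda>(\<sigma>,\<pi>). (\<lambda>i j. \<sigma> i (Transposition.transpose 0 c j), \<pi> \<circ> Transposition.transpose 0 c))
           (Sg n m \<times> Pm m) (Sg n m \<times> Pm m)" (is "bij_betw ?h ?S ?S")
proof (rule bij_betw_byWitness[where f' = ?h])
  show "\<forall>a\<in>?S. ?h (?h a) = a" by (auto simp: comp_assoc)
  show "\<forall>a\<in>?S. ?h (?h a) = a" by (auto simp: comp_assoc)
  have t: "Transposition.transpose 0 c permutes {0..<m}" using c by (intro permutes_swap_id) auto
  show "?h ` ?S \<subseteq> ?S"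
  proof
    fix y assume "y \<in> ?h ` ?S"
    then obtain \<sigma> \<pi> where s: "\<sigma> \<in> Sg n m" and p: "\<pi> \<in> Pm m" and y: "y = ?h (\<sigma>,\<pi>)" by auto
    have "(\<lambda>i j. \<sigma> i (Transposition.transpose 0 c j)) \<in> Sg n m"
    proof -
      have tm: "\<And>j. (Transposition.transpose 0 c j < m) = (j < m)" using c by (auto simp: Transposition.transpose_def)
      let ?t = "Transposition.transpose 0 c"
      show ?thesis unfolding Sg_def
      proof (intro CollectI allI conjI impI)
        fix i j
        from s have A: "\<sigma> i (?t j) \<in> {-1,1}" "\<sigma> i (?t j) \<noteq> 1 \<longrightarrow> i \<in> {1..n} \<and> ?t j < m"
          unfolding Sg_def by blast+
        show "\<sigma> i (?t j) \<in> {-1,1}" using A by simp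
        assume "\<sigma> i (?t j) \<noteq> 1" then show "i\<in>{1..n}" "j<m" using A tm by auto
      qed
    qed
    moreover have "\<pi> \<circ> Transposition.transpose 0 c \<in> Pm m"
      using p t unfolding Pm_def by (auto intro: permutes_compose)
    ultimately show "y \<in> ?S" using y by auto
  qed
  then show "?h ` ?S \<subseteq> ?S" .
qed

lemma sum_Rc_swap:
  assumes c: "c < m"
  shows "(\<Sum>(\<sigma>,\<pi>)\<in>Sg n m \<times> Pm m. of_bool (m - r < Rc m (Vf n k \<mu> x \<sigma>) \<pi> 0) :: nat)
       = (\<Sum>(\<sigma>,\<pi>)\<in>Sg n m \<times> Pm m. of_bool (m - r < Rc m (Vf n k \<mu> x \<sigma>) \<pi> c))"
proof -
  let ?h = "\<lambda>(\<sigma>,\<pi>). (\<lambda>i j. \<sigma> i (Transposition.transpose 0 c j), \<pi> \<circ> Transposition.transpose 0 c)"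
  let ?g = "\<lambda>(\<sigma>,\<pi>). (of_bool (m - r < Rc m (Vf n k \<mu> x \<sigma>) \<pi> 0) :: nat)"
  have "(\<Sum>p\<in>Sg n m \<times> Pm m. ?g (?h p)) = (\<Sum>p\<in>Sg n m \<times> Pm m. ?g p)"
    by (rule sum.reindex_bij_betw[OF swap_bij[OF c]])
  moreover have "?g (?h p) = (case p of (\<sigma>,\<pi>) \<Rightarrow> of_bool (m - r < Rc m (Vf n k \<mu> x \<sigma>) \<pi> c))" for p
  proof (cases p)
    case (Pair \<sigma> \<pi>)
    have "Vf n k \<mu> x (\<lambda>i j. \<sigma> i (Transposition.transpose 0 c j)) = (\<lambda>j. Vf n k \<mu> x \<sigma> (Transposition.transpose 0 c j))"
      by (simp add: Vf_def fun_eq_iff)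
    then show ?thesis using Pair Rc_swap[OF c, of "Vf n k \<mu> x \<sigma>" \<pi>] by simp
  qed
  ultimately show ?thesis by simp
qed

lemma sum_Rc_total:
  assumes rm: "r \<le> m"
  shows "m * (\<Sum>(\<sigma>,\<pi>)\<in>Sg n m \<times> Pm m. of_bool (m - r < Rc m (Vf n k \<mu> x \<sigma>) \<pi> 0) :: nat)
       = r * card (Sg n m \<times> Pm m)"
proof -
  have "m * (\<Sum>(\<sigma>,\<pi>)\<in>Sg n m \<times> Pm m. of_bool (m - r < Rc m (Vf n k \<mu> x \<sigma>) \<pi> 0) :: nat)
      = (\<Sum>c<m. (\<Sum>(\<sigma>,\<pi>)\<in>Sg n m \<times> Pm m. of_bool (m - r < Rc m (Vf n k \<mu> x \<sigma>) \<pi> c) :: nat))"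
  proof -
    have "(\<Sum>c<m. (\<Sum>(\<sigma>,\<pi>)\<in>Sg n m \<times> Pm m. of_bool (m - r < Rc m (Vf n k \<mu> x \<sigma>) \<pi> c) :: nat))
       = (\<Sum>c<m. (\<Sum>(\<sigma>,\<pi>)\<in>Sg n m \<times> Pm m. of_bool (m - r < Rc m (Vf n k \<mu> x \<sigma>) \<pi> 0) :: nat))"
      by (rule sum.cong[OF refl]) (simp add: sum_Rc_swap[where n=n and r=r and k=k and \<mu>=\<mu> and x=x])
    then show ?thesis by simp
  qed
  also have "\<dots> = (\<Sum>(\<sigma>,\<pi>)\<in>Sg n m \<times> Pm m. (\<Sum>c<m. of_bool (m - r < Rc m (Vf n k \<mu> x \<sigma>) \<pi> c) :: nat))"
    by (subst sum.swap) (simp add: split_def)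
  also have "\<dots> = (\<Sum>(\<sigma>,\<pi>)\<in>Sg n m \<times> Pm m. r)"
  proof (rule sum.cong[OF refl])
    fix p assume p: "p \<in> Sg n m \<times> Pm m"
    obtain \<sigma> \<pi> where pe: "p = (\<sigma>,\<pi>)" by fastforce
    have inj: "inj_on \<pi> {0..<m}" using p pe unfolding Pm_def by (auto intro: permutes_inj_on)
    have "(\<Sum>c<m. of_bool (m - r < Rc m (Vf n k \<mu> x \<sigma>) \<pi> c) :: nat) = card {c\<in>{0..<m}. m - r < Rc m (Vf n k \<mu> x \<sigma>) \<pi> c}"
      by (simp add: sum.If_cases lessThan_atLeast0 Int_def)
    also have "\<dots> = r" by (rule Rc_count[OF inj rm])
    finally show "(case p of (\<sigma>,\<pi>) \<Rightarrow> (\<Sum>c<m. of_bool (m - r < Rc m (Vf n k \<mu> x \<sigma>) \<pi> c) :: nat)) = (case p of (\<sigma>,\<pi>) \<Rightarrow> r)"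
      using pe by simp
  qed
  also have "\<dots> = r * card (Sg n m \<times> Pm m)" by simp
  finally show ?thesis .
qed



definition Esp :: "nat \<Rightarrow> (nat \<Rightarrow> real) set" where
  "Esp n = {\<epsilon>. \<forall>i. \<epsilon> i \<in> {-1,1} \<and> (\<epsilon> i \<noteq> 1 \<longrightarrow> i \<in> {1..n})}"

definition Asp :: "nat \<Rightarrow> nat \<Rightarrow> (nat \<Rightarrow> nat \<Rightarrow> real) set" where
  "Asp n m = {\<alpha>. \<forall>i j. \<alpha> i j \<in> {-1, 1} \<and> (\<alpha> i j \<noteq> 1 \<longrightarrow> i \<in> {1..n} \<and> j \<in> {1..m-1})}"

lemma rand_space_eq: "rand_space n m = Asp n m \<times> Pm m"
  unfolding rand_space_def Asp_def Pm_def ..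

definition xe :: "real \<Rightarrow> (nat \<Rightarrow> real) \<Rightarrow> (nat \<Rightarrow> real) \<Rightarrow> nat \<Rightarrow> real" where
  "xe \<mu> \<epsilon> x = (\<lambda>i. \<mu> + \<epsilon> i * (x i - \<mu>))"

definition Phi :: "nat \<Rightarrow> (nat \<Rightarrow> real) \<Rightarrow> (nat \<Rightarrow> nat \<Rightarrow> real) \<Rightarrow> nat \<Rightarrow> nat \<Rightarrow> real" where
  "Phi m \<epsilon> \<alpha> = (\<lambda>i j. if j < m then \<epsilon> i * \<alpha> i j else 1)"

lemma Asp_0: "\<alpha> \<in> Asp n m \<Longrightarrow> \<alpha> i 0 = 1"
  unfolding Asp_def by force

lemma resample_eq:
  assumes "\<alpha> \<in> Asp n m" "j < m"
  shows "resample \<alpha> (xe \<mu> \<epsilon> x) \<mu> j = (\<lambda>i. \<mu> + Phi m \<epsilon> \<alpha> i j * (x i - \<mu>))"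
  using assms Asp_0[OF assms(1)] by (auto simp: resample_def xe_def Phi_def fun_eq_iff algebra_simps)

lemma rank_eq:
  assumes "\<alpha> \<in> Asp n m" "0 < m"
  shows "rank n k m \<alpha> \<pi> (xe \<mu> \<epsilon> x) \<mu> = Rc m (Vf n k \<mu> x (Phi m \<epsilon> \<alpha>)) \<pi> 0"
proof -
  have s: "{0..<m} - {0} = {1..m-1}" using assms by auto
  have "{j \<in> {1..m-1}. prec_pi \<pi> (refvar n k \<alpha> (xe \<mu> \<epsilon> x) \<mu> 0) 0 (refvar n k \<alpha> (xe \<mu> \<epsilon> x) \<mu> j) j}
     = {j \<in> {1..m-1}. prec_pi \<pi> (Vf n k \<mu> x (Phi m \<epsilon> \<alpha>) 0) 0 (Vf n k \<mu> x (Phi m \<epsilon> \<alpha>) j) j}"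
  proof (rule Collect_cong)
    fix j
    have r0: "refvar n k \<alpha> (xe \<mu> \<epsilon> x) \<mu> 0 = Vf n k \<mu> x (Phi m \<epsilon> \<alpha>) 0"
      unfolding refvar_def Vf_def using resample_eq[OF assms(1), of 0] assms by simp
    have "j \<in> {1..m-1} \<Longrightarrow> refvar n k \<alpha> (xe \<mu> \<epsilon> x) \<mu> j = Vf n k \<mu> x (Phi m \<epsilon> \<alpha>) j"
    proof -
      assume "j \<in> {1..m-1}"
      then have "j < m" using assms by auto
      then show ?thesis unfolding refvar_def Vf_def using resample_eq[OF assms(1)] by simp
    qed
    then show "(j \<in> {1..m-1} \<and> prec_pi \<pi> (refvar n k \<alpha> (xe \<mu> \<epsilon> x) \<mu> 0) 0 (refvar n k \<alpha> (xe \<mu> \<epsilon> x) \<mu> j) j)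
      = (j \<in> {1..m-1} \<and> prec_pi \<pi> (Vf n k \<mu> x (Phi m \<epsilon> \<alpha>) 0) 0 (Vf n k \<mu> x (Phi m \<epsilon> \<alpha>) j) j)"
      using r0 by auto
  qed
  then show ?thesis unfolding rank_def Rc_def s by simp
qed

lemma pm1_sq: "(e::real) \<in> {-1,1} \<Longrightarrow> e * e = 1" by auto

lemma Phi_bij:
  assumes m: "0 < m"
  shows "bij_betw (\<lambda>(\<epsilon>,(\<alpha>,\<pi>)). (Phi m \<epsilon> \<alpha>, \<pi>)) (Esp n \<times> (Asp n m \<times> Pm m)) (Sg n m \<times> Pm m)"
proof (rule bij_betw_byWitness[where f' = "\<lambda>(\<sigma>,\<pi>). (\<lambda>i. \<sigma> i 0, (\<lambda>i j. if j < m then \<sigma> i 0 * \<sigma> i j else 1, \<pi>))"])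
  show "\<forall>a\<in>Esp n \<times> (Asp n m \<times> Pm m).
     (\<lambda>(\<sigma>,\<pi>). (\<lambda>i. \<sigma> i 0, (\<lambda>i j. if j < m then \<sigma> i 0 * \<sigma> i j else 1, \<pi>))) ((\<lambda>(\<epsilon>,(\<alpha>,\<pi>)). (Phi m \<epsilon> \<alpha>, \<pi>)) a) = a"
  proof
    fix a assume a: "a \<in> Esp n \<times> (Asp n m \<times> Pm m)"
    obtain \<epsilon> \<alpha> \<pi> where ae: "a = (\<epsilon>,(\<alpha>,\<pi>))" by (cases a) auto
    have e: "\<epsilon> \<in> Esp n" and al: "\<alpha> \<in> Asp n m" using a ae by auto
    have "(\<lambda>i. Phi m \<epsilon> \<alpha> i 0) = \<epsilon>" using m Asp_0[OF al] by (simp add: Phi_def)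
    moreover have "(\<lambda>i j. if j < m then Phi m \<epsilon> \<alpha> i 0 * Phi m \<epsilon> \<alpha> i j else 1) = \<alpha>"
    proof (intro ext)
      fix i j
      have ee: "\<epsilon> i * \<epsilon> i = 1" using e unfolding Esp_def by (intro pm1_sq) blast
      show "(if j < m then Phi m \<epsilon> \<alpha> i 0 * Phi m \<epsilon> \<alpha> i j else 1) = \<alpha> i j"
      proof (cases "j < m")
        case True then show ?thesis using m Asp_0[OF al] ee
          by (simp add: Phi_def)
      next
        case False then show ?thesis using al unfolding Asp_def by force
      qed
    qed
    ultimately show "(\<lambda>(\<sigma>,\<pi>). (\<lambda>i. \<sigma> i 0, (\<lambda>i j. if j < m then \<sigma> i 0 * \<sigma> i j else 1, \<pi>))) ((\<lambda>(\<epsilon>,(\<alpha>,\<pi>)). (Phi m \<epsilon> \<alpha>, \<pi>)) a) = a"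
      using ae by simp
  qed
  show "\<forall>b\<in>Sg n m \<times> Pm m. (\<lambda>(\<epsilon>,(\<alpha>,\<pi>)). (Phi m \<epsilon> \<alpha>, \<pi>)) ((\<lambda>(\<sigma>,\<pi>). (\<lambda>i. \<sigma> i 0, (\<lambda>i j. if j < m then \<sigma> i 0 * \<sigma> i j else 1, \<pi>))) b) = b"
  proof
    fix b assume b: "b \<in> Sg n m \<times> Pm m"
    obtain \<sigma> \<pi> where be: "b = (\<sigma>,\<pi>)" by (cases b) auto
    have s: "\<sigma> \<in> Sg n m" using b be by auto
    have "Phi m (\<lambda>i. \<sigma> i 0) (\<lambda>i j. if j < m then \<sigma> i 0 * \<sigma> i j else 1) = \<sigma>"
    proof (intro ext)
      fix i j
      have ee: "\<sigma> i 0 * \<sigma> i 0 = 1" using s unfolding Sg_def by (intro pm1_sq) blast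
      show "Phi m (\<lambda>i. \<sigma> i 0) (\<lambda>i j. if j < m then \<sigma> i 0 * \<sigma> i j else 1) i j = \<sigma> i j"
      proof (cases "j < m")
        case True then show ?thesis using ee by (simp add: Phi_def)
      next
        case False then show ?thesis using s unfolding Sg_def Phi_def by force
      qed
    qed
    then show "(\<lambda>(\<epsilon>,(\<alpha>,\<pi>)). (Phi m \<epsilon> \<alpha>, \<pi>)) ((\<lambda>(\<sigma>,\<pi>). (\<lambda>i. \<sigma> i 0, (\<lambda>i j. if j < m then \<sigma> i 0 * \<sigma> i j else 1, \<pi>))) b) = b"
      using be by simp
  qed
  show "(\<lambda>(\<epsilon>,(\<alpha>,\<pi>)). (Phi m \<epsilon> \<alpha>, \<pi>)) ` (Esp n \<times> (Asp n m \<times> Pm m)) \<subseteq> Sg n m \<times> Pm m"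
  proof (rule image_subsetI)
    fix a assume a: "a \<in> Esp n \<times> (Asp n m \<times> Pm m)"
    obtain \<epsilon> \<alpha> \<pi> where ae: "a = (\<epsilon>,(\<alpha>,\<pi>))" by (cases a) auto
    have e: "\<epsilon> \<in> Esp n" and al: "\<alpha> \<in> Asp n m" and p: "\<pi> \<in> Pm m" using a ae by auto
    have "Phi m \<epsilon> \<alpha> \<in> Sg n m" unfolding Sg_def
    proof (intro CollectI allI conjI impI)
      fix i j
      have ei: "\<epsilon> i \<in> {-1,1}" "\<epsilon> i \<noteq> 1 \<longrightarrow> i \<in> {1..n}" using e unfolding Esp_def by blast+
      have ai: "\<alpha> i j \<in> {-1,1}" "\<alpha> i j \<noteq> 1 \<longrightarrow> i \<in> {1..n} \<and> j \<in> {1..m-1}" using al unfolding Asp_def by blast+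
      show "Phi m \<epsilon> \<alpha> i j \<in> {-1,1}" using ei ai by (auto simp: Phi_def)
      assume ne: "Phi m \<epsilon> \<alpha> i j \<noteq> 1"
      then show "i \<in> {1..n}" using ei ai by (auto simp: Phi_def split: if_splits)
      show "j < m" using ne by (auto simp: Phi_def split: if_splits)
    qed
    then show "(\<lambda>(\<epsilon>,(\<alpha>,\<pi>)). (Phi m \<epsilon> \<alpha>, \<pi>)) a \<in> Sg n m \<times> Pm m" using p ae by simp
  qed
  show "(\<lambda>(\<sigma>,\<pi>). (\<lambda>i. \<sigma> i 0, (\<lambda>i j. if j < m then \<sigma> i 0 * \<sigma> i j else 1, \<pi>))) ` (Sg n m \<times> Pm m) \<subseteq> Esp n \<times> (Asp n m \<times> Pm m)"
  proof (rule image_subsetI)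
    fix b assume b: "b \<in> Sg n m \<times> Pm m"
    obtain \<sigma> \<pi> where be: "b = (\<sigma>,\<pi>)" by (cases b) auto
    have s: "\<sigma> \<in> Sg n m" and p: "\<pi> \<in> Pm m" using b be by auto
    have "(\<lambda>i. \<sigma> i 0) \<in> Esp n" using s m unfolding Sg_def Esp_def by blast
    moreover have "(\<lambda>i j. if j < m then \<sigma> i 0 * \<sigma> i j else 1) \<in> Asp n m" unfolding Asp_def
    proof (intro CollectI allI conjI impI)
      fix i j
      have s0: "\<sigma> i 0 \<in> {-1,1}" "\<sigma> i 0 \<noteq> 1 \<longrightarrow> i \<in> {1..n}" using s m unfolding Sg_def by blast+
      have sj: "\<sigma> i j \<in> {-1,1}" "\<sigma> i j \<noteq> 1 \<longrightarrow> i \<in> {1..n} \<and> j < m" using s unfolding Sg_def by blast+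
      show "(if j < m then \<sigma> i 0 * \<sigma> i j else 1) \<in> {-1,1}" using s0 sj by auto
      assume ne: "(if j < m then \<sigma> i 0 * \<sigma> i j else 1) \<noteq> 1"
      have j0: "j \<noteq> 0" proof assume "j = 0" then show False using ne pm1_sq[OF s0(1)] by (auto split: if_splits) qed
      show "i \<in> {1..n}" using ne s0 sj j0 by (auto split: if_splits)
      show "j \<in> {1..m-1}" using ne s0 sj j0 by (auto split: if_splits)
    qed
    ultimately show "(\<lambda>(\<sigma>,\<pi>). (\<lambda>i. \<sigma> i 0, (\<lambda>i j. if j < m then \<sigma> i 0 * \<sigma> i j else 1, \<pi>))) b \<in> Esp n \<times> (Asp n m \<times> Pm m)"
      using p be by simp
  qed
qed

lemma count_main:
  assumes m: "0 < m" and rm: "r \<le> m"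
  shows "m * (\<Sum>(\<epsilon>,(\<alpha>,\<pi>))\<in>Esp n \<times> (Asp n m \<times> Pm m). of_bool (m - r < rank n k m \<alpha> \<pi> (xe \<mu> \<epsilon> x) \<mu>) :: nat)
       = r * card (Esp n \<times> (Asp n m \<times> Pm m))"
proof -
  let ?h = "\<lambda>(\<epsilon>,(\<alpha>,\<pi>)). (Phi m \<epsilon> \<alpha>, \<pi>)"
  let ?g = "\<lambda>(\<sigma>,\<pi>). (of_bool (m - r < Rc m (Vf n k \<mu> x \<sigma>) \<pi> 0) :: nat)"
  have "(\<Sum>(\<epsilon>,(\<alpha>,\<pi>))\<in>Esp n \<times> (Asp n m \<times> Pm m). of_bool (m - r < rank n k m \<alpha> \<pi> (xe \<mu> \<epsilon> x) \<mu>) :: nat)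
      = (\<Sum>a\<in>Esp n \<times> (Asp n m \<times> Pm m). ?g (?h a))"
    by (rule sum.cong[OF refl]) (auto simp: rank_eq[OF _ m])
  also have "\<dots> = (\<Sum>b\<in>Sg n m \<times> Pm m. ?g b)"
    by (rule sum.reindex_bij_betw[OF Phi_bij[OF m]])
  finally have "m * (\<Sum>(\<epsilon>,(\<alpha>,\<pi>))\<in>Esp n \<times> (Asp n m \<times> Pm m). of_bool (m - r < rank n k m \<alpha> \<pi> (xe \<mu> \<epsilon> x) \<mu>) :: nat)
       = r * card (Sg n m \<times> Pm m)" using sum_Rc_total[OF rm, of n k \<mu> x] by simp
  also have "card (Sg n m \<times> Pm m) = card (Esp n \<times> (Asp n m \<times> Pm m))"
    by (rule bij_betw_same_card[OF Phi_bij[OF m], symmetric])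
  finally show ?thesis .
qed



lemma len_filter_sort: "length (filter P (sort ys)) = length (filter P ys)"
  by (metis mset_filter mset_sort size_mset)

lemma sorted_nth_le:
  fixes zs :: "real list"
  assumes s: "sorted zs" and t: "t < length zs"
  shows "(zs ! t \<le> a) = (t < length (filter (\<lambda>z. z \<le> a) zs))"
proof
  assume le: "zs ! t \<le> a"
  have "\<forall>z\<in>set (take (Suc t) zs). z \<le> a"
  proof
    fix z assume "z \<in> set (take (Suc t) zs)"
    then obtain i where i: "i < length (take (Suc t) zs)" "z = take (Suc t) zs ! i" by (auto simp: in_set_conv_nth)
    then have "i \<le> t" "z = zs ! i" by auto
    then have "z \<le> zs ! t" using s t by (simp add: sorted_nth_mono)
    then show "z \<le> a" using le by simp
  qed
  then have "filter (\<lambda>z. z \<le> a) (take (Suc t) zs) = take (Suc t) zs" by simp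
  then have "length (filter (\<lambda>z. z \<le> a) (take (Suc t) zs)) = Suc t" using t by simp
  moreover have "length (filter (\<lambda>z. z \<le> a) zs) = length (filter (\<lambda>z. z \<le> a) (take (Suc t) zs)) + length (filter (\<lambda>z. z \<le> a) (drop (Suc t) zs))"
    by (metis append_take_drop_id filter_append length_append)
  ultimately show "t < length (filter (\<lambda>z. z \<le> a) zs)" by simp
next
  assume lt: "t < length (filter (\<lambda>z. z \<le> a) zs)"
  show "zs ! t \<le> a"
  proof (rule ccontr)
    assume "\<not> zs ! t \<le> a"
    then have gt: "a < zs ! t" by simp
    have "\<forall>z\<in>set (drop t zs). \<not> z \<le> a"
    proof
      fix z assume "z \<in> set (drop t zs)"
      then obtain i where i: "i < length (drop t zs)" "z = drop t zs ! i" by (auto simp: in_set_conv_nth)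
      then have "z = zs ! (t + i)" "t + i < length zs" by auto
      then have "zs ! t \<le> z" using s by (simp add: sorted_nth_mono)
      then show "\<not> z \<le> a" using gt by simp
    qed
    then have "filter (\<lambda>z. z \<le> a) (drop t zs) = []" by (simp add: filter_empty_conv)
    moreover have "length (filter (\<lambda>z. z \<le> a) zs) = length (filter (\<lambda>z. z \<le> a) (take t zs)) + length (filter (\<lambda>z. z \<le> a) (drop t zs))"
      by (metis append_take_drop_id filter_append length_append)
    moreover have "length (filter (\<lambda>z. z \<le> a) (take t zs)) \<le> t"
      by (metis length_filter_le length_take min.bounded_iff nle_le)
    ultimately show False using lt by simp
  qed
qed

lemma len_filter_meas:
  fixes F :: "'c \<Rightarrow> 'b \<Rightarrow> real"
  assumes "\<And>l. l \<in> set ls \<Longrightarrow> F l \<in> borel_measurable N"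
  shows "(\<lambda>w. real (length (filter (\<lambda>l. F l w \<le> a) ls))) \<in> borel_measurable N"
  using assms
proof (induction ls)
  case Nil then show ?case by simp
next
  case (Cons l ls)
  have [measurable]: "F l \<in> borel_measurable N" using Cons by simp
  have [measurable]: "(\<lambda>w. real (length (filter (\<lambda>l. F l w \<le> a) ls))) \<in> borel_measurable N" using Cons by simp
  have eq: "(\<lambda>w. real (length (filter (\<lambda>l. F l w \<le> a) (l # ls)))) = (\<lambda>w. (if F l w \<le> a then 1 else 0) + real (length (filter (\<lambda>l. F l w \<le> a) ls)))"
    by auto
  have "{w\<in>space N. F l w \<le> a} \<in> sets N" by (rule borel_measurable_le) measurable
  then have "(\<lambda>w. if F l w \<le> a then 1 else 0 :: real) \<in> borel_measurable N"
    by (intro measurable_If) auto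
  then show ?case unfolding eq by measurable
qed

lemma sort_nth_meas:
  fixes F :: "'c \<Rightarrow> 'b \<Rightarrow> real"
  assumes "\<And>l. l \<in> set ls \<Longrightarrow> F l \<in> borel_measurable N" and t: "t < length ls"
  shows "(\<lambda>w. sort (map (\<lambda>l. F l w) ls) ! t) \<in> borel_measurable N"
proof (subst borel_measurable_iff_le, intro allI)
  fix a
  have "{w \<in> space N. sort (map (\<lambda>l. F l w) ls) ! t \<le> a} = {w \<in> space N. real t < real (length (filter (\<lambda>l. F l w \<le> a) ls))}"
  proof (rule Collect_cong)
    fix w
    have "(sort (map (\<lambda>l. F l w) ls) ! t \<le> a) = (t < length (filter (\<lambda>z. z \<le> a) (sort (map (\<lambda>l. F l w) ls))))"
      by (rule sorted_nth_le) (use t in auto)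
    also have "\<dots> = (t < length (filter (\<lambda>l. F l w \<le> a) ls))"
      by (simp add: len_filter_sort filter_map comp_def)
    finally show "(w \<in> space N \<and> sort (map (\<lambda>l. F l w) ls) ! t \<le> a) = (w \<in> space N \<and> real t < real (length (filter (\<lambda>l. F l w \<le> a) ls)))"
      by simp
  qed
  also have "\<dots> \<in> sets N"
    by (rule borel_measurable_less[OF borel_measurable_const len_filter_meas]) (use assms in auto)
  finally show "{w \<in> space N. sort (map (\<lambda>l. F l w) ls) ! t \<le> a} \<in> sets N" .
qed

lemma mom_meas:
  assumes k: "1 \<le> k" and g: "\<And>i. i \<in> {1..n} \<Longrightarrow> (\<lambda>w. g w i) \<in> borel_measurable N"
  shows "(\<lambda>w. mom n k (g w)) \<in> borel_measurable N"
proof -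
  define F where "F l w = (\<Sum>i\<in>block n k l. g w i) / real (card (block n k l))" for l w
  define t where "t = (if even k then k div 2 - 1 else k div 2)"
  have Fm: "F l \<in> borel_measurable N" for l
  proof -
    have "block n k l \<subseteq> {1..n}" unfolding block_def by auto
    then have [measurable]: "i \<in> block n k l \<Longrightarrow> (\<lambda>w. g w i) \<in> borel_measurable N" for i using g by auto
    show ?thesis unfolding F_def by measurable
  qed
  have t: "t < length [1..<k+1]" using k unfolding t_def by auto
  have "(\<lambda>w. mom n k (g w)) = (\<lambda>w. sort (map (\<lambda>l. F l w) [1..<k+1]) ! t)"
    unfolding mom_def med_def F_def t_def by (simp add: Let_def)
  then show ?thesis using sort_nth_meas[OF _ t, of F N] Fm by simp
qed



lemma rank_meas:
  fixes N :: "'b measure" and h :: "'b \<Rightarrow> nat \<Rightarrow> real" and a :: "'b \<Rightarrow> nat \<Rightarrow> nat \<Rightarrow> real"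
    and p :: "'b \<Rightarrow> nat \<Rightarrow> nat"
  assumes k: "1 \<le> k" and h: "\<And>i. i \<in> {1..n} \<Longrightarrow> (\<lambda>w. h w i) \<in> borel_measurable N"
    and a: "\<And>i j. (\<lambda>w. a w i j) \<in> borel_measurable N"
    and p: "\<And>j. (\<lambda>w. p w j) \<in> measurable N (count_space UNIV)"
  shows "{w\<in>space N. m - r < rank n k m (a w) (p w) (h w) \<theta>} \<in> sets N"
proof -
  define T where "T j w = refvar n k (a w) (h w) \<theta> j" for j w
  have Tm[measurable]: "T j \<in> borel_measurable N" for j
  proof -
    have "(\<lambda>w. resample (a w) (h w) \<theta> j i) \<in> borel_measurable N" if "i \<in> {1..n}" for i
    proof -
      have [measurable]: "(\<lambda>w. h w i) \<in> borel_measurable N" "(\<lambda>w. a w i j) \<in> borel_measurable N"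
        using h that a by auto
      show ?thesis unfolding resample_def by (cases "j = 0") simp_all
    qed
    then have "(\<lambda>w. mom n k (resample (a w) (h w) \<theta> j)) \<in> borel_measurable N"
      by (intro mom_meas[OF k]) auto
    then show ?thesis unfolding T_def refvar_def by measurable
  qed
  have pm[measurable]: "(\<lambda>w. p w j) \<in> measurable N (count_space UNIV)" for j using p by simp
  have pl: "{w\<in>space N. p w 0 < p w j} \<in> sets N" for j
  proof -
    have "{w\<in>space N. p w 0 < p w j} = (\<Union>u. ((\<lambda>w. p w 0) -` {u} \<inter> space N) \<inter> ((\<lambda>w. p w j) -` {u<..} \<inter> space N))"
      by auto
    also have "\<dots> \<in> sets N"
      by (intro sets.countable_UN sets.Int measurable_sets[OF pm]) auto
    finally show ?thesis .
  qed
  have P: "{w\<in>space N. prec_pi (p w) (T 0 w) 0 (T j w) j} \<in> sets N" for j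
  proof -
    have "{w\<in>space N. prec_pi (p w) (T 0 w) 0 (T j w) j} =
      {w\<in>space N. T 0 w < T j w} \<union> ({w\<in>space N. T 0 w = T j w} \<inter> {w\<in>space N. p w 0 < p w j})"
      unfolding prec_pi_def by auto
    also have "\<dots> \<in> sets N" using pl by measurable
    finally show ?thesis .
  qed
  have ind: "(\<lambda>w. if prec_pi (p w) (T 0 w) 0 (T j w) j then 1 else 0 :: real) \<in> borel_measurable N" for j
    by (intro measurable_If) (use P in auto)
  have "(\<lambda>w. real (rank n k m (a w) (p w) (h w) \<theta>)) = (\<lambda>w. 1 + (\<Sum>j\<in>{1..m-1}. if prec_pi (p w) (T 0 w) 0 (T j w) j then 1 else 0))"
    unfolding rank_def T_def by (auto simp: sum.If_cases Int_def)
  moreover have "(\<lambda>w. 1 + (\<Sum>j\<in>{1..m-1}. if prec_pi (p w) (T 0 w) 0 (T j w) j then 1 else 0 :: real)) \<in> borel_measurable N"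
    using ind by measurable
  ultimately have rm: "(\<lambda>w. real (rank n k m (a w) (p w) (h w) \<theta>)) \<in> borel_measurable N" by simp
  have "{w\<in>space N. m - r < rank n k m (a w) (p w) (h w) \<theta>} = {w\<in>space N. real (m - r) < real (rank n k m (a w) (p w) (h w) \<theta>)}"
    by simp
  also have "\<dots> \<in> sets N" using rm by measurable
  finally show ?thesis .
qed



lemma mom_local:
  assumes "\<And>i. i \<in> {1..n} \<Longrightarrow> x i = x' i"
  shows "mom n k x = mom n k x'"
proof -
  have "(\<Sum>i\<in>block n k l. x i) = (\<Sum>i\<in>block n k l. x' i)" for l
    by (rule sum.cong[OF refl]) (use assms in \<open>auto simp: block_def\<close>)
  then show ?thesis unfolding mom_def by simp
qed

lemma rank_local:
  assumes "\<And>i. i \<in> {1..n} \<Longrightarrow> x i = x' i"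
  shows "rank n k m \<alpha> \<pi> x \<theta> = rank n k m \<alpha> \<pi> x' \<theta>"
proof -
  have "refvar n k \<alpha> x \<theta> j = refvar n k \<alpha> x' \<theta> j" for j
    unfolding refvar_def by (rule arg_cong[where f="\<lambda>z. z - \<theta>"], rule mom_local) (use assms in \<open>simp add: resample_def\<close>)
  then show ?thesis unfolding rank_def by simp
qed

lemma finite_Esp: "finite (Esp n)"
proof (rule inj_on_finite[where f="\<lambda>\<epsilon>. restrict \<epsilon> {1..n}" and B="PiE {1..n} (\<lambda>_. {-1,1})"])
  show "inj_on (\<lambda>\<epsilon>. restrict \<epsilon> {1..n}) (Esp n)"
  proof (rule inj_onI)
    fix a b assume a: "a \<in> Esp n" and b: "b \<in> Esp n" and eq: "restrict a {1..n} = restrict b {1..n}"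
    show "a = b"
    proof
      fix i show "a i = b i"
      proof (cases "i \<in> {1..n}")
        case True then show ?thesis using eq by (metis restrict_apply')
      next
        case False
        then have "a i = 1" "b i = 1" using a b unfolding Esp_def by auto
        then show ?thesis by simp
      qed
    qed
  qed
  show "(\<lambda>\<epsilon>. restrict \<epsilon> {1..n}) ` Esp n \<subseteq> PiE {1..n} (\<lambda>_. {-1,1})"
    unfolding Esp_def by auto
  show "finite (PiE {1..n} (\<lambda>_. {-1::real,1}))" by (intro finite_PiE) auto
qed

lemma finite_Asp: "finite (Asp n m)"
proof (rule inj_on_finite[where f="\<lambda>\<alpha>. restrict (\<lambda>(i,j). \<alpha> i j) ({1..n} \<times> {1..m-1})" and B="PiE ({1..n} \<times> {1..m-1}) (\<lambda>_. {-1,1})"])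
  show "inj_on (\<lambda>\<alpha>. restrict (\<lambda>(i,j). \<alpha> i j) ({1..n} \<times> {1..m-1})) (Asp n m)"
  proof (rule inj_onI)
    fix a b assume a: "a \<in> Asp n m" and b: "b \<in> Asp n m"
      and eq: "restrict (\<lambda>(i,j). a i j) ({1..n} \<times> {1..m-1}) = restrict (\<lambda>(i,j). b i j) ({1..n} \<times> {1..m-1})"
    show "a = b"
    proof (intro ext)
      fix i j show "a i j = b i j"
      proof (cases "(i,j) \<in> {1..n} \<times> {1..m-1}")
        case True then show ?thesis using fun_cong[OF eq, of "(i,j)"] by simp
      next
        case False
        then have "a i j = 1" "b i j = 1" using a b unfolding Asp_def by auto
        then show ?thesis by simp
      qed
    qed
  qed
  show "(\<lambda>\<alpha>. restrict (\<lambda>(i,j). \<alpha> i j) ({1..n} \<times> {1..m-1})) ` Asp n m \<subseteq> PiE ({1..n} \<times> {1..m-1}) (\<lambda>_. {-1,1})"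
  proof (rule image_subsetI)
    fix \<alpha> assume "\<alpha> \<in> Asp n m"
    then have "\<forall>i j. \<alpha> i j \<in> {-1,1}" unfolding Asp_def by blast
    then show "restrict (\<lambda>(i,j). \<alpha> i j) ({1..n} \<times> {1..m-1}) \<in> PiE ({1..n} \<times> {1..m-1}) (\<lambda>_. {-1,1})"
      by (simp add: restrict_PiE_iff split_def)
  qed
  show "finite (PiE ({1..n} \<times> {1..m-1}) (\<lambda>_. {-1::real,1}))" by (intro finite_PiE) auto
qed

lemma count_main':
  assumes m: "0 < m" and rm: "r \<le> m"
  shows "real m * (\<Sum>\<epsilon>\<in>Esp n. \<Sum>q\<in>Asp n m \<times> Pm m. of_bool (m - r < rank n k m (fst q) (snd q) (xe \<mu> \<epsilon> x) \<mu>) :: real)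
       = real r * (real (card (Esp n)) * real (card (Asp n m \<times> Pm m)))"
proof -
  have "(\<Sum>\<epsilon>\<in>Esp n. \<Sum>q\<in>Asp n m \<times> Pm m. of_bool (m - r < rank n k m (fst q) (snd q) (xe \<mu> \<epsilon> x) \<mu>) :: real)
      = real (\<Sum>(\<epsilon>,(\<alpha>,\<pi>))\<in>Esp n \<times> (Asp n m \<times> Pm m). of_bool (m - r < rank n k m \<alpha> \<pi> (xe \<mu> \<epsilon> x) \<mu>) :: nat)"
    by (simp add: sum.cartesian_product split_def)
  then have "real m * (\<Sum>\<epsilon>\<in>Esp n. \<Sum>q\<in>Asp n m \<times> Pm m. of_bool (m - r < rank n k m (fst q) (snd q) (xe \<mu> \<epsilon> x) \<mu>) :: real)
      = real (m * (\<Sum>(\<epsilon>,(\<alpha>,\<pi>))\<in>Esp n \<times> (Asp n m \<times> Pm m). of_bool (m - r < rank n k m \<alpha> \<pi> (xe \<mu> \<epsilon> x) \<mu>) :: nat))"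
    by simp
  also have "\<dots> = real (r * card (Esp n \<times> (Asp n m \<times> Pm m)))"
    by (subst count_main[OF m rm]) simp
  finally show ?thesis by (simp add: card_cartesian_product)
qed

lemma distr_distr_real:
  fixes f :: "'a \<Rightarrow> real" and g :: "real \<Rightarrow> real"
  assumes "f \<in> borel_measurable M" "g \<in> borel_measurable borel"
  shows "distr (distr M borel f) borel g = distr M borel (\<lambda>x. g (f x))"
  using assms by (simp add: distr_distr comp_def)

theorem theorem2:
  fixes M :: "'a measure" and X :: "nat \<Rightarrow> 'a \<Rightarrow> real"
    and \<mu> :: real and n k m r :: nat
  assumes "prob_space M"
    and "prob_space.indep_vars M (\<lambda>_. borel) X {1..n}"
    and "\<And>i. i \<in> {1..n} \<Longrightarrow> distr M borel (X i) = distr M borel (X 1)"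
    and "distr M borel (\<lambda>\<omega>. X 1 \<omega> - \<mu>) = distr M borel (\<lambda>\<omega>. \<mu> - X 1 \<omega>)"
    and "1 \<le> k" and "k \<le> n" and "1 \<le> r" and "r \<le> m"
  shows "measure (M \<Otimes>\<^sub>M measure_pmf (pmf_of_set (rand_space n m)))
           {p \<in> space (M \<Otimes>\<^sub>M measure_pmf (pmf_of_set (rand_space n m))).
              rank n k m (fst (snd p)) (snd (snd p)) (\<lambda>i. X i (fst p)) \<mu> > m - r}
         = real r / real m"
proof -
  interpret P: prob_space M by (rule assms(1))
  have indep: "P.indep_vars (\<lambda>_. borel) X {1..n}" by (rule assms(2))
  have n1: "1 \<le> n" and m0: "0 < m" and rm: "r \<le> m" and k1: "1 \<le> k" using assms by auto
  define I where "I = {1..n::nat}"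
  have I0: "I \<noteq> {}" using n1 unfolding I_def by auto
  have XmI: "X i \<in> borel_measurable M" if "i \<in> I" for i
    using indep that unfolding P.indep_vars_def I_def by auto
  have Xm: "X i \<in> borel_measurable M" if "i \<in> {1..n}" for i using XmI that unfolding I_def by simp
  have X1m[measurable]: "X 1 \<in> borel_measurable M" using Xm n1 by simp
  define RS where "RS = rand_space n m"
  have RS_eq: "RS = Asp n m \<times> Pm m" unfolding RS_def by (rule rand_space_eq)
  have finRS: "finite RS" unfolding RS_eq using finite_Asp Pm_finite by simp
  have "(\<lambda>_ _. 1) \<in> Asp n m" unfolding Asp_def by simp
  moreover have "id \<in> Pm m" unfolding Pm_def by (simp add: permutes_id)
  ultimately have neRS: "RS \<noteq> {}" unfolding RS_eq by blast
  have oneE: "(\<lambda>_. 1) \<in> Esp n" unfolding Esp_def by simp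
  have neE: "Esp n \<noteq> {}" using oneE by blast
  have finE: "finite (Esp n)" by (rule finite_Esp)
  define A where "A \<epsilon> q = {\<omega>\<in>space M. m - r < rank n k m (fst q) (snd q) (xe \<mu> \<epsilon> (\<lambda>i. X i \<omega>)) \<mu>}" for \<epsilon> q
  have Ameas: "A \<epsilon> q \<in> sets M" for \<epsilon> q
    unfolding A_def
  proof (rule rank_meas[OF k1])
    fix i :: nat assume i: "i \<in> {1..n}"
    have [measurable]: "X i \<in> borel_measurable M" using Xm i by simp
    show "(\<lambda>w. xe \<mu> \<epsilon> (\<lambda>i. X i w) i) \<in> borel_measurable M" unfolding xe_def by measurable
  qed auto
  define Q where "Q = measure_pmf (pmf_of_set RS)"
  define S where "S = {p \<in> space (M \<Otimes>\<^sub>M Q). m - r < rank n k m (fst (snd p)) (snd (snd p)) (\<lambda>i. X i (fst p)) \<mu>}"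
  have Smeas: "S \<in> sets (M \<Otimes>\<^sub>M Q)"
    unfolding S_def
  proof (rule rank_meas[OF k1])
    fix i :: nat assume i: "i \<in> {1..n}"
    have [measurable]: "X i \<in> borel_measurable M" using Xm i by simp
    show "(\<lambda>w. X i (fst w)) \<in> borel_measurable (M \<Otimes>\<^sub>M Q)" by measurable
  next
    fix i j
    have "(\<lambda>q::(nat \<Rightarrow> nat \<Rightarrow> real) \<times> (nat \<Rightarrow> nat). fst q i j) \<in> borel_measurable Q" unfolding Q_def by simp
    then show "(\<lambda>w. fst (snd w) i j) \<in> borel_measurable (M \<Otimes>\<^sub>M Q)"
      by (rule measurable_compose[OF measurable_snd])
  next
    fix j
    have "(\<lambda>q::(nat \<Rightarrow> nat \<Rightarrow> real) \<times> (nat \<Rightarrow> nat). snd q j) \<in> measurable Q (count_space UNIV)" unfolding Q_def by simp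
    then show "(\<lambda>w. snd (snd w) j) \<in> measurable (M \<Otimes>\<^sub>M Q) (count_space UNIV)"
      by (rule measurable_compose[OF measurable_snd])
  qed
  interpret PQ: pair_sigma_finite M Q
    unfolding Q_def by (intro pair_sigma_finite.intro P.sigma_finite_measure_axioms measure_pmf.sigma_finite_measure_axioms)
  have pre: "(\<lambda>x. (x, q)) -` S = A (\<lambda>_. 1) q" for q
    unfolding S_def A_def by (auto simp: space_pair_measure Q_def xe_def)
  have "emeasure (M \<Otimes>\<^sub>M Q) S = (\<integral>\<^sup>+q. emeasure M (A (\<lambda>_. 1) q) \<partial>Q)"
    using PQ.emeasure_pair_measure_alt2[OF Smeas] pre by simp
  also have "\<dots> = (\<Sum>q\<in>RS. emeasure M (A (\<lambda>_. 1) q) * pmf (pmf_of_set RS) q)"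
    unfolding Q_def by (subst nn_integral_measure_pmf_finite) (simp_all add: finRS neRS)
  also have "\<dots> = (\<Sum>q\<in>RS. ennreal (measure M (A (\<lambda>_. 1) q) / real (card RS)))"
    by (intro sum.cong refl) (simp add: finRS neRS P.emeasure_eq_measure ennreal_mult''[symmetric])
  also have "\<dots> = ennreal (\<Sum>q\<in>RS. measure M (A (\<lambda>_. 1) q) / real (card RS))"
    by (rule sum_ennreal) simp
  finally have step1: "measure (M \<Otimes>\<^sub>M Q) S = (\<Sum>q\<in>RS. measure M (A (\<lambda>_. 1) q) / real (card RS))"
    unfolding measure_def by (simp add: sum_nonneg)
  define PI where "PI = PiM I (\<lambda>_. borel :: real measure)"
  define Y where "Y \<epsilon> i = (\<lambda>\<omega>. \<mu> + \<epsilon> i * (X i \<omega> - \<mu>))" for \<epsilon> :: "nat \<Rightarrow> real" and i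
  have D1: "distr M borel (X 1) = distr M borel (\<lambda>\<omega>. 2 * \<mu> - X 1 \<omega>)"
  proof -
    have ma: "(\<lambda>\<omega>. X 1 \<omega> - \<mu>) \<in> borel_measurable M" by measurable
    have mb: "(\<lambda>\<omega>. \<mu> - X 1 \<omega>) \<in> borel_measurable M" by measurable
    have mc: "(\<lambda>y::real. y + \<mu>) \<in> borel_measurable borel" by measurable
    have "distr M borel (X 1) = distr (distr M borel (\<lambda>\<omega>. X 1 \<omega> - \<mu>)) borel (\<lambda>y. y + \<mu>)"
      using distr_distr_real[OF ma mc] by simp
    also have "\<dots> = distr (distr M borel (\<lambda>\<omega>. \<mu> - X 1 \<omega>)) borel (\<lambda>y. y + \<mu>)"
      using assms(4) by simp
    also have "\<dots> = distr M borel (\<lambda>\<omega>. 2 * \<mu> - X 1 \<omega>)"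
      using distr_distr_real[OF mb mc] by simp
    finally show ?thesis .
  qed
  have Dsym: "distr M borel (\<lambda>\<omega>. 2 * \<mu> - X i \<omega>) = distr M borel (X i)" if i: "i \<in> I" for i
  proof -
    have mi: "X i \<in> borel_measurable M" using XmI i by simp
    have md: "(\<lambda>y::real. 2 * \<mu> - y) \<in> borel_measurable borel" by measurable
    have Xi_eq: "distr M borel (X i) = distr M borel (X 1)" using i unfolding I_def by (rule assms(3))
    have "distr M borel (\<lambda>\<omega>. 2 * \<mu> - X i \<omega>) = distr (distr M borel (X i)) borel (\<lambda>y. 2 * \<mu> - y)"
      using distr_distr_real[OF mi md] by simp
    also have "\<dots> = distr (distr M borel (X 1)) borel (\<lambda>y. 2 * \<mu> - y)"
      using Xi_eq by simp
    also have "\<dots> = distr M borel (\<lambda>\<omega>. 2 * \<mu> - X 1 \<omega>)"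
      using distr_distr_real[OF X1m md] by simp
    also have "\<dots> = distr M borel (X 1)" using D1 by simp
    also have "\<dots> = distr M borel (X i)" using Xi_eq by simp
    finally show ?thesis .
  qed
  have DY: "distr M borel (Y \<epsilon> i) = distr M borel (X i)" if e: "\<epsilon> \<in> Esp n" and i: "i \<in> I" for \<epsilon> i
  proof -
    have "\<epsilon> i \<in> {-1,1}" using e unfolding Esp_def by blast
    then show ?thesis
    proof
      assume "\<epsilon> i = -1"
      then have "Y \<epsilon> i = (\<lambda>\<omega>. 2 * \<mu> - X i \<omega>)" unfolding Y_def by (auto simp: fun_eq_iff algebra_simps)
      then show ?thesis using Dsym[OF i] by simp
    next
      assume "\<epsilon> i \<in> {1}"
      then have "Y \<epsilon> i = X i" unfolding Y_def by (auto simp: fun_eq_iff)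
      then show ?thesis by simp
    qed
  qed
  have Ymeas: "Y \<epsilon> i \<in> borel_measurable M" if i: "i \<in> I" for \<epsilon> i
  proof -
    have [measurable]: "X i \<in> borel_measurable M" using XmI i by simp
    show ?thesis unfolding Y_def by measurable
  qed
  have distrY: "distr M PI (\<lambda>\<omega>. \<lambda>i\<in>I. Y \<epsilon> i \<omega>) = PiM I (\<lambda>i. distr M borel (X i))" if e: "\<epsilon> \<in> Esp n" for \<epsilon>
  proof -
    have indY: "P.indep_vars (\<lambda>_. borel) (Y \<epsilon>) I"
    proof -
      have "P.indep_vars (\<lambda>_. borel) (\<lambda>i \<omega>. (\<lambda>x. \<mu> + \<epsilon> i * (x - \<mu>)) (X i \<omega>)) I"
        by (rule P.indep_vars_compose2[OF indep[folded I_def]]) simp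
      then show ?thesis unfolding Y_def by simp
    qed
    have "distr M PI (\<lambda>\<omega>. \<lambda>i\<in>I. Y \<epsilon> i \<omega>) = PiM I (\<lambda>i. distr M borel (Y \<epsilon> i))"
      unfolding PI_def using P.indep_vars_iff_distr_eq_PiM'[OF I0 Ymeas] indY by simp
    also have "\<dots> = PiM I (\<lambda>i. distr M borel (X i))"
      by (rule PiM_cong) (simp_all add: DY[OF e])
    finally show ?thesis .
  qed
  define B where "B q = {x\<in>space PI. m - r < rank n k m (fst q) (snd q) x \<mu>}" for q
  have Bmeas: "B q \<in> sets PI" for q
    unfolding B_def
  proof (rule rank_meas[OF k1])
    fix i :: nat assume "i \<in> {1..n}"
    then show "(\<lambda>x. x i) \<in> borel_measurable PI" unfolding PI_def I_def by measurable
  qed auto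
  have AB: "measure M (A \<epsilon> q) = measure (PiM I (\<lambda>i. distr M borel (X i))) (B q)" if e: "\<epsilon> \<in> Esp n" for \<epsilon> q
  proof -
    have mY: "(\<lambda>\<omega>. \<lambda>i\<in>I. Y \<epsilon> i \<omega>) \<in> measurable M PI"
      unfolding PI_def by (rule measurable_restrict) (rule Ymeas)
    have "A \<epsilon> q = (\<lambda>\<omega>. \<lambda>i\<in>I. Y \<epsilon> i \<omega>) -` B q \<inter> space M"
    proof -
      have "rank n k m (fst q) (snd q) (xe \<mu> \<epsilon> (\<lambda>i. X i \<omega>)) \<mu> = rank n k m (fst q) (snd q) (\<lambda>i\<in>I. Y \<epsilon> i \<omega>) \<mu>" for \<omega>
        by (rule rank_local) (simp add: I_def xe_def Y_def)
      moreover have "(\<lambda>i\<in>I. Y \<epsilon> i \<omega>) \<in> space PI" for \<omega> unfolding PI_def by (simp add: space_PiM)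
      ultimately show ?thesis unfolding A_def B_def by auto
    qed
    then have "measure M (A \<epsilon> q) = measure (distr M PI (\<lambda>\<omega>. \<lambda>i\<in>I. Y \<epsilon> i \<omega>)) (B q)"
      using measure_distr[OF mY Bmeas] by simp
    then show ?thesis using distrY[OF e] by simp
  qed
  have step2: "measure M (A \<epsilon> q) = measure M (A (\<lambda>_. 1) q)" if "\<epsilon> \<in> Esp n" for \<epsilon> q
    using AB[OF that] AB[OF oneE] by simp
  have integ: "integrable M (indicator (A \<epsilon> q) :: 'a \<Rightarrow> real)" for \<epsilon> q
    using Ameas by (intro integrable_real_indicator) (auto simp: P.emeasure_eq_measure)
  define C where "C = real r * (real (card (Esp n)) * real (card RS)) / real m"
  have pw: "(\<Sum>\<epsilon>\<in>Esp n. \<Sum>q\<in>RS. indicator (A \<epsilon> q) \<omega> :: real) = C" if w: "\<omega> \<in> space M" for \<omega>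
  proof -
    have "(\<Sum>\<epsilon>\<in>Esp n. \<Sum>q\<in>RS. indicator (A \<epsilon> q) \<omega> :: real)
        = (\<Sum>\<epsilon>\<in>Esp n. \<Sum>q\<in>Asp n m \<times> Pm m. of_bool (m - r < rank n k m (fst q) (snd q) (xe \<mu> \<epsilon> (\<lambda>i. X i \<omega>)) \<mu>) :: real)"
      unfolding RS_eq A_def using w by (simp add: indicator_def)
    then show ?thesis unfolding C_def RS_eq using count_main'[OF m0 rm, of n k \<mu> "\<lambda>i. X i \<omega>"] m0
      by (simp add: field_simps)
  qed
  have "(\<Sum>\<epsilon>\<in>Esp n. \<Sum>q\<in>RS. measure M (A \<epsilon> q)) = (\<Sum>\<epsilon>\<in>Esp n. \<Sum>q\<in>RS. integral\<^sup>L M (indicator (A \<epsilon> q)))"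
    using Ameas by (simp add: Int_absorb2 sets.sets_into_space)
  also have "\<dots> = integral\<^sup>L M (\<lambda>\<omega>. \<Sum>\<epsilon>\<in>Esp n. \<Sum>q\<in>RS. indicator (A \<epsilon> q) \<omega>)"
    using integ by (simp add: integral_sum)
  also have "\<dots> = integral\<^sup>L M (\<lambda>\<omega>. C)"
    by (rule Bochner_Integration.integral_cong[OF refl]) (rule pw)
  also have "\<dots> = C" by (simp add: P.prob_space)
  finally have s3: "(\<Sum>\<epsilon>\<in>Esp n. \<Sum>q\<in>RS. measure M (A \<epsilon> q)) = C" .
  have "(\<Sum>\<epsilon>\<in>Esp n. \<Sum>q\<in>RS. measure M (A \<epsilon> q)) = real (card (Esp n)) * (\<Sum>q\<in>RS. measure M (A (\<lambda>_. 1) q))"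
    using step2 by simp
  then have h: "real (card (Esp n)) * (\<Sum>q\<in>RS. measure M (A (\<lambda>_. 1) q)) = real (card (Esp n)) * (real r * real (card RS) / real m)"
  proof -
    have "C = real (card (Esp n)) * (real r * real (card RS) / real m)"
      unfolding C_def by (simp add: field_simps)
    then show ?thesis using s3 \<open>(\<Sum>\<epsilon>\<in>Esp n. \<Sum>q\<in>RS. measure M (A \<epsilon> q)) = real (card (Esp n)) * (\<Sum>q\<in>RS. measure M (A (\<lambda>_. 1) q))\<close>
      by simp
  qed
  have cE: "real (card (Esp n)) \<noteq> 0" using finE neE by (simp add: card_gt_0_iff)
  have "(\<Sum>q\<in>RS. measure M (A (\<lambda>_. 1) q)) = real r * real (card RS) / real m"
    using h mult_left_cancel[OF cE] by blast
  then have "measure (M \<Otimes>\<^sub>M Q) S = real r / real m"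
    using step1 finRS neRS by (simp add: sum_divide_distrib[symmetric] card_gt_0_iff)
  then show ?thesis unfolding S_def Q_def RS_def by simp
qed


end
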